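(* If a state $\Phi$ satisfies $D_{\min,\mathbb{F}}(\Phi)=D_{s,\mathbb{F}}(\Phi)=:r$, then for every $\epsilon\in[0,1)$, $$D^\epsilon_{H,\mathbb{F}}(\Phi)=r+\log\tfrac{1}{1-\epsilon},\qquad D^\epsilon_{\max,\mathbb{F}}(\Phi)=D^\epsilon_{s,\mathbb{F}}(\Phi)=\max\{r-\log\tfrac{1}{1-\epsilon},0\}.$$ If instead $\Phi$ satisfies $D_{\min,\mathrm{aff}(\mathbb{F})}(\Phi)=D_{\max,\mathbb{F}}(\Phi)=:r$, then for every $\epsilon\in[0,1)$, $$D^\epsilon_{H,\mathrm{aff}(\mathbb{F})}(\Phi)=D^\epsilon_{H,\mathbb{F}}(\Phi)=r+\log\tfrac{1}{1-\epsilon},\qquad D^\epsilon_{\max,\mathbb{F}}(\Phi)=\max\{r-\log\tfrac{1}{1-\epsilon},0\}.$$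
   Context: Finite-dimensional Hilbert space, $\log$ base 2. $\mathbb{F}$ is a convex and closed set of (free) states. $F(\rho,\sigma)=\|\sqrt\rho\sqrt\sigma\|_1^2$. $D_H^\epsilon(\rho\|\sigma)=\sup\{-\log\mathrm{Tr}[P\sigma]:0\le P\le\mathbb{1},\mathrm{Tr}[P\rho]\ge1-\epsilon\}$ (also used for Hermitian $\sigma$); $D_{\min}(\rho\|\sigma)=D_H^0(\rho\|\sigma)=-\log\mathrm{Tr}[\Pi_\rho\sigma]$. $D^\epsilon_{H,\mathbb{F}}(\rho)=\inf_{\sigma\in\mathbb{F}}D_H^\epsilon(\rho\|\sigma)$, $D_{\min,\mathbb{F}}=D^0_{H,\mathbb{F}}$; $\mathrm{aff}(\mathbb{F})$ is the affine hull, $D^\epsilon_{H,\mathrm{aff}(\mathbb{F})}(\rho)=\inf_{\sigma\in\mathrm{aff}(\mathbb{F})}D^\epsilon_H(\rho\|\sigma)$, $D_{\min,\mathrm{aff}(\mathbb{F})}=D^0_{H,\mathrm{aff}(\mathbb{F})}$. $D_{\max,\mathbb{F}}(\rho)=\inf\{\log(1+s):\frac{\rho+s\tau}{1+s}\in\mathbb{F},\tau\text{ a state}\}$; $D_{s,\mathbb{F}}(\rho)=\inf\{\log(1+s):\frac{\rho+s\tau}{1+s}\in\mathbb{F},\tau\in\mathbb{F}\}$. Smoothed: $D^\epsilon_{\max,\mathbb{F}}(\rho)=\inf\{D_{\max,\mathbb{F}}(\rho'):F(\rho',\rho)\ge1-\epsilon\}$ and $D^\epsilon_{s,\mathbb{F}}(\rho)=\inf\{D_{s,\mathbb{F}}(\rho'):F(\rho',\rho)\ge1-\epsilon\}$,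 infima over states $\rho'$. *)

theory Defs
  imports "HOL-Analysis.Analysis"
begin

text \<open>Operators on a finite-dimensional Hilbert space C^n, with n given by
  the finite index type 'n, are represented as complex n x n matrices.\<close>

definition adj :: "complex^'n^'n \<Rightarrow> complex^'n^'n" where
  "adj A = (\<chi> i j. cnj (A $ j $ i))"

definition hermitian :: "complex^'n^'n \<Rightarrow> bool" where
  "hermitian A \<longleftrightarrow> adj A = A"

definition psd :: "complex^'n^'n \<Rightarrow> bool" where
  "psd A \<longleftrightarrow> hermitian A \<and>
     (\<forall>v :: complex^'n. 0 \<le> Re (\<Sum>i\<in>UNIV. cnj (v $ i) * (A *v v) $ i))"

definition is_state :: "complex^'n^'n \<Rightarrow> bool" where
  "is_state \<rho> \<longleftrightarrow> psd \<rho> \<and> trace \<rho> = 1"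

text \<open>The (unique) positive semidefinite square root.\<close>
definition msqrt :: "complex^'n^'n \<Rightarrow> complex^'n^'n" where
  "msqrt A = (THE B. psd B \<and> B ** B = A)"

definition trace_norm :: "complex^'n^'n \<Rightarrow> real" where
  "trace_norm A = Re (trace (msqrt (adj A ** A)))"

definition fid :: "complex^'n^'n \<Rightarrow> complex^'n^'n \<Rightarrow> real" where
  "fid \<rho> \<sigma> = (trace_norm (msqrt \<rho> ** msqrt \<sigma>))\<^sup>2"

definition neglog :: "real \<Rightarrow> ereal" where
  "neglog t = (if t > 0 then ereal (- log 2 t) else \<infinity>)"

text \<open>Hypothesis testing relative entropy (sigma a state or Hermitian).\<close>
definition DH :: "real \<Rightarrow> complex^'n^'n \<Rightarrow> complex^'n^'n \<Rightarrow> ereal" where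
  "DH \<epsilon> \<rho> \<sigma> = (SUP P \<in> {P. psd P \<and> psd (mat 1 - P) \<and> 1 - \<epsilon> \<le> Re (trace (P ** \<rho>))}.
                     neglog (Re (trace (P ** \<sigma>))))"

definition Dmin :: "complex^'n^'n \<Rightarrow> complex^'n^'n \<Rightarrow> ereal" where
  "Dmin \<rho> \<sigma> = DH 0 \<rho> \<sigma>"

definition DH_set :: "real \<Rightarrow> (complex^'n^'n) set \<Rightarrow> complex^'n^'n \<Rightarrow> ereal" where
  "DH_set \<epsilon> S \<rho> = (INF \<sigma> \<in> S. DH \<epsilon> \<rho> \<sigma>)"

definition Dmin_set :: "(complex^'n^'n) set \<Rightarrow> complex^'n^'n \<Rightarrow> ereal" where
  "Dmin_set S \<rho> = DH_set 0 S \<rho>"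

definition Dmax_F :: "(complex^'n^'n) set \<Rightarrow> complex^'n^'n \<Rightarrow> ereal" where
  "Dmax_F F \<rho> = (INF s \<in> {s::real. 0 \<le> s \<and> (\<exists>\<tau>. is_state \<tau> \<and>
        (1 / (1 + s)) *\<^sub>R (\<rho> + s *\<^sub>R \<tau>) \<in> F)}. ereal (log 2 (1 + s)))"

definition Ds_F :: "(complex^'n^'n) set \<Rightarrow> complex^'n^'n \<Rightarrow> ereal" where
  "Ds_F F \<rho> = (INF s \<in> {s::real. 0 \<le> s \<and> (\<exists>\<tau>. \<tau> \<in> F \<and>
        (1 / (1 + s)) *\<^sub>R (\<rho> + s *\<^sub>R \<tau>) \<in> F)}. ereal (log 2 (1 + s)))"

definition Dmax_eps :: "(complex^'n^'n) set \<Rightarrow> real \<Rightarrow> complex^'n^'n \<Rightarrow> ereal" where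
  "Dmax_eps F \<epsilon> \<rho> = (INF \<rho>' \<in> {\<rho>'. is_state \<rho>' \<and> 1 - \<epsilon> \<le> fid \<rho>' \<rho>}. Dmax_F F \<rho>')"

definition Ds_eps :: "(complex^'n^'n) set \<Rightarrow> real \<Rightarrow> complex^'n^'n \<Rightarrow> ereal" where
  "Ds_eps F \<epsilon> \<rho> = (INF \<rho>' \<in> {\<rho>'. is_state \<rho>' \<and> 1 - \<epsilon> \<le> fid \<rho>' \<rho>}. Ds_F F \<rho>')"

end

theory Submission
  imports Defs
begin



definition ci :: "complex^'n \<Rightarrow> complex^'n \<Rightarrow> complex" where
  "ci x y = (\<Sum>i\<in>UNIV. cnj (x$i) * y$i)"

abbreviation qf :: "complex^'n^'n \<Rightarrow> complex^'n \<Rightarrow> complex" where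
  "qf A v \<equiv> ci v (A *v v)"

lemma ci_add_right: "ci x (y + z) = ci x y + ci x z"
  by (simp add: ci_def algebra_simps sum.distrib)
lemma ci_add_left: "ci (x + y) z = ci x z + ci y z"
  by (simp add: ci_def algebra_simps sum.distrib)
lemma ci_diff_right: "ci x (y - z) = ci x y - ci x z"
  by (simp add: ci_def algebra_simps sum_subtractf)
lemma ci_diff_left: "ci (x - y) z = ci x z - ci y z"
  by (simp add: ci_def algebra_simps sum_subtractf)
lemma ci_scale_right: "ci x (c *s y) = c * ci x y"
  by (simp add: ci_def sum_distrib_left algebra_simps)
lemma ci_scale_left: "ci (c *s x) y = cnj c * ci x y"
  by (simp add: ci_def sum_distrib_left algebra_simps)
lemma ci_zero_right[simp]: "ci x 0 = 0" by (simp add: ci_def)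
lemma ci_zero_left[simp]: "ci 0 x = 0" by (simp add: ci_def)
lemma ci_sum_right: "ci x (sum f S) = (\<Sum>s\<in>S. ci x (f s))"
  by (induct S rule: infinite_finite_induct) (auto simp: ci_add_right)
lemma ci_sum_left: "ci (sum f S) y = (\<Sum>s\<in>S. ci (f s) y)"
  by (induct S rule: infinite_finite_induct) (auto simp: ci_add_left)
lemma ci_cnj: "cnj (ci x y) = ci y x"
  by (simp add: ci_def mult.commute)
lemma Re_ci_inner: "Re (ci x y) = inner x y"
  by (simp add: ci_def inner_vec_def inner_complex_def)
lemma ci_self_real: "ci x x = of_real (norm x ^ 2)"
proof -
  have "Im (ci x x) = 0" by (simp add: ci_def)
  moreover have "Re (ci x x) = norm x ^ 2" by (simp add: Re_ci_inner power2_norm_eq_inner)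
  ultimately show ?thesis by (simp add: complex_eq_iff)
qed
lemma ci_self_eq0: "ci x x = 0 \<longleftrightarrow> x = 0"
  by (simp add: ci_self_real)

lemma adj_mult_vec: "ci x (A *v y) = ci (adj A *v x) y"
  by (simp add: ci_def adj_def matrix_vector_mult_def sum_distrib_left sum_distrib_right
      algebra_simps cnj_sum) (rule sum.swap)

lemma herm_ci: "hermitian A \<Longrightarrow> ci x (A *v y) = ci (A *v x) y"
  by (metis adj_mult_vec hermitian_def)

lemma herm_qf_real: "hermitian A \<Longrightarrow> qf A v = of_real (Re (qf A v))"
  by (metis Reals_cnj_iff ci_cnj herm_ci complex_is_Real_iff of_real_Re)

lemma adj_adj[simp]: "adj (adj A) = A" by (simp add: adj_def vec_eq_iff)
lemma adj_mult: "adj (A ** B) = adj B ** adj A"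
  by (simp add: adj_def vec_eq_iff matrix_matrix_mult_def cnj_sum mult.commute)
lemma adj_add: "adj (A + B) = adj A + adj B" by (simp add: adj_def vec_eq_iff)
lemma adj_diff: "adj (A - B) = adj A - adj B" by (simp add: adj_def vec_eq_iff)
lemma adj_scaleR: "adj (c *\<^sub>R A) = c *\<^sub>R adj A" by (simp add: adj_def vec_eq_iff)
lemma adj_mat: "adj (mat x) = mat (cnj x)" by (simp add: adj_def vec_eq_iff mat_def)




lemma psd_iff: "psd A \<longleftrightarrow> hermitian A \<and> (\<forall>v. 0 \<le> Re (qf A v))"
  by (simp add: psd_def ci_def)

lemma cscaleR: "c *\<^sub>R (z::complex) = of_real c * z"
  by (simp add: scaleR_conv_of_real)

lemma scaleR_svec: "c *\<^sub>R (x::complex^'n) = of_real c *s x"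
  unfolding vec_eq_iff by (simp add: cscaleR)

lemma mv_scaleR: "(c *\<^sub>R A) *v x = c *\<^sub>R (A *v (x::complex^'n))"
  unfolding vec_eq_iff by (simp add: matrix_vector_mult_def sum_distrib_left cscaleR algebra_simps)

lemma mv_diff: "(A - B) *v x = A *v x - B *v (x::complex^'n)"
  by (simp add: vec_eq_iff matrix_vector_mult_def sum_subtractf algebra_simps)

lemma mv_minus: "(- A) *v x = - (A *v (x::complex^'n))"
  by (simp add: vec_eq_iff matrix_vector_mult_def sum_negf)

lemma mv_diff_right: "A *v (x - y) = A *v x - A *v (y::complex^'n)"
  by (simp add: vec_eq_iff matrix_vector_mult_def sum_subtractf algebra_simps)

lemma ci_scaleR_right: "ci x (c *\<^sub>R y) = of_real c * ci x y"
  by (simp add: scaleR_svec ci_scale_right)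
lemma ci_scaleR_left: "ci (c *\<^sub>R x) y = of_real c * ci x y"
  by (simp add: scaleR_svec ci_scale_left)

lemma herm_add: "hermitian A \<Longrightarrow> hermitian B \<Longrightarrow> hermitian (A + B)"
  by (simp add: hermitian_def adj_add)
lemma herm_diff: "hermitian A \<Longrightarrow> hermitian B \<Longrightarrow> hermitian (A - B)"
  by (simp add: hermitian_def adj_diff)
lemma herm_scaleR: "hermitian A \<Longrightarrow> hermitian (c *\<^sub>R A)"
  by (simp add: hermitian_def adj_scaleR)
lemma herm_mat1: "hermitian (mat 1)"
  by (simp add: hermitian_def adj_mat)

lemma psd_add: "psd A \<Longrightarrow> psd B \<Longrightarrow> psd (A + B)"
  by (auto simp: psd_iff herm_add matrix_vector_mult_add_rdistrib ci_add_right intro: add_nonneg_nonneg)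

lemma psd_scaleR: "psd A \<Longrightarrow> 0 \<le> c \<Longrightarrow> psd (c *\<^sub>R A)"
  by (auto simp: psd_iff herm_scaleR mv_scaleR ci_scaleR_right)

lemma psd_zero: "psd (0::complex^'n^'n)"
  by (simp add: psd_iff hermitian_def adj_def vec_eq_iff matrix_vector_mult_def ci_def)

lemma psd_congr: "psd Q \<Longrightarrow> psd (adj X ** Q ** X)"
proof -
  assume "psd Q"
  then have h: "hermitian Q" and q: "\<And>v. 0 \<le> Re (qf Q v)" by (auto simp: psd_iff)
  have "hermitian (adj X ** Q ** X)"
    using h by (simp add: hermitian_def adj_mult matrix_mul_assoc)
  moreover have "qf (adj X ** Q ** X) v = qf Q (X *v v)" for v
    by (simp add: matrix_vector_mul_assoc[symmetric] adj_mult_vec)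
  ultimately show ?thesis using q by (simp add: psd_iff)
qed

lemma qf_expand:
  assumes "hermitian Q"
  shows "Re (qf Q (x + of_real t *s w)) = Re (qf Q x) + 2 * t * Re (ci w (Q *v x)) + t^2 * Re (qf Q w)"
proof -
  have e: "ci x (Q *v w) = cnj (ci w (Q *v x))"
    using assms by (simp add: herm_ci ci_cnj)
  have "Q *v (x + of_real t *s w) = Q *v x + of_real t *s (Q *v w)"
    by (simp add: vector_scalar_commute matrix_vector_right_distrib)
  then have "qf Q (x + of_real t *s w) = ci x (Q *v x) + of_real t * ci x (Q *v w)
      + (cnj (of_real t) * ci w (Q *v x) + cnj (of_real t) * (of_real t * ci w (Q *v w)))"
    by (simp only: ci_add_left ci_add_right ci_scale_left ci_scale_right) (simp add: algebra_simps)
  then have "qf Q (x + of_real t *s w) = qf Q x + of_real t * cnj (ci w (Q *v x)) + of_real t * ci w (Q *v x)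
      + of_real (t * t) * qf Q w"
    by (simp add: e algebra_simps)
  then show ?thesis by (simp add: power2_eq_square)
qed

lemma quad_zero:
  fixes a b :: real
  assumes "\<And>t. 2 * t * a + t^2 * b \<le> 0"
  shows "a = 0"
proof (rule ccontr)
  assume "a \<noteq> 0"
  define t where "t = a / (\<bar>b\<bar> + 1)"
  have ta: "t * a = a^2 / (\<bar>b\<bar> + 1)" by (simp add: t_def power2_eq_square)
  have tapos: "t * a > 0" using \<open>a \<noteq> 0\<close> unfolding ta by (simp add: divide_pos_pos)
  have "t^2 * \<bar>b\<bar> = (t * a) * (\<bar>b\<bar> / (\<bar>b\<bar> + 1))"
    by (simp add: t_def power2_eq_square field_simps)
  also have "\<dots> \<le> t * a"
    using tapos by (intro mult_left_le) (auto simp: divide_le_eq_1)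
  finally have 1: "t^2 * \<bar>b\<bar> \<le> t * a" .
  have 2: "t^2 * b \<ge> - (t^2 * \<bar>b\<bar>)"
    by (metis abs_ge_minus_self abs_mult abs_power2 minus_le_iff)
  have "2 * t * a + t^2 * b > 0" using 1 2 tapos by linarith
  with assms[of t] show False by simp
qed

lemma herm_local_max:
  assumes "hermitian Q" "\<And>t::real. Re (qf Q (x + of_real t *s w)) \<le> Re (qf Q x)"
  shows "Re (ci w (Q *v x)) = 0"
proof (rule quad_zero[of _ "Re (qf Q w)"])
  fix t :: real
  show "2 * t * Re (ci w (Q *v x)) + t\<^sup>2 * Re (qf Q w) \<le> 0"
    using assms(2)[of t] qf_expand[OF assms(1), of x t w] by simp
qed

lemma psd_qf0:
  assumes "psd Q" "Re (qf Q x) = 0"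
  shows "Q *v x = 0"
proof -
  have h: "hermitian (- Q)" using assms(1) by (simp add: psd_iff hermitian_def adj_def vec_eq_iff)
  have neg: "ci y ((- Q) *v z) = - ci y (Q *v z)" for y z
    by (simp add: mv_minus ci_def sum_negf)
  have "Re (ci w ((- Q) *v x)) = 0" for w
  proof (rule herm_local_max[OF h])
    fix t :: real
    have "0 \<le> Re (qf Q (x + complex_of_real t *s w))" using assms(1) by (simp add: psd_iff)
    then show "Re (qf (- Q) (x + complex_of_real t *s w)) \<le> Re (qf (- Q) x)"
      using assms(2) by (simp only: neg) simp
  qed
  from this[of "Q *v x"] have "Re (ci (Q *v x) (Q *v x)) = 0"
    by (simp add: neg)
  then show ?thesis by (simp add: ci_self_real)
qed




definition orthonormal :: "(complex^'n) set \<Rightarrow> bool" where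
  "orthonormal B \<longleftrightarrow> (\<forall>u\<in>B. \<forall>v\<in>B. ci u v = (if u = v then 1 else 0))"

definition complete :: "(complex^'n) set \<Rightarrow> bool" where
  "complete B \<longleftrightarrow> (\<forall>w. w = (\<Sum>u\<in>B. ci u w *s u))"

definition smat :: "(complex^'n) set \<Rightarrow> (complex^'n \<Rightarrow> complex) \<Rightarrow> complex^'n^'n" where
  "smat B f = (\<chi> i j. \<Sum>u\<in>B. f u * u$i * cnj (u$j))"

lemma smat_mv: "smat B f *v w = (\<Sum>u\<in>B. (f u * ci u w) *s u)"
  unfolding vec_eq_iff
proof
  fix i
  have "(smat B f *v w) $ i = (\<Sum>j\<in>UNIV. \<Sum>u\<in>B. f u * u$i * cnj (u$j) * w$j)"
    by (simp add: smat_def matrix_vector_mult_def sum_distrib_right)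
  also have "\<dots> = (\<Sum>u\<in>B. \<Sum>j\<in>UNIV. f u * u$i * cnj (u$j) * w$j)"
    by (rule sum.swap)
  also have "\<dots> = (\<Sum>u\<in>B. (f u * ci u w) * u$i)"
    by (simp add: ci_def sum_distrib_left algebra_simps)
  also have "\<dots> = (\<Sum>u\<in>B. (f u * ci u w) *s u) $ i"
    by (simp add: sum_component)
  finally show "(smat B f *v w) $ i = (\<Sum>u\<in>B. (f u * ci u w) *s u) $ i" .
qed

lemma orthonormal_sum_delta:
  assumes "finite B" "orthonormal B" "v \<in> B"
  shows "(\<Sum>u\<in>B. (g u * ci u v) *s u) = g v *s v"
proof -
  have "(\<Sum>u\<in>B. (g u * ci u v) *s u) = (\<Sum>u\<in>B. if u = v then g v *s v else 0)"
    using assms by (intro sum.cong) (auto simp: orthonormal_def)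
  also have "\<dots> = g v *s v" using assms by (simp add: sum.delta')
  finally show ?thesis .
qed

lemma smat_eig:
  assumes "finite B" "orthonormal B" "v \<in> B"
  shows "smat B f *v v = f v *s v"
  using orthonormal_sum_delta[OF assms] by (simp add: smat_mv)

lemma ci_smat: "ci x (smat B f *v w) = (\<Sum>u\<in>B. f u * ci u w * ci x u)"
  by (simp add: smat_mv ci_sum_right ci_scale_right)

lemma qf_smat: "qf (smat B f) w = (\<Sum>u\<in>B. f u * (cnj (ci u w) * ci u w))"
  by (simp add: ci_smat ci_cnj algebra_simps)

lemma adj_smat: "adj (smat B f) = smat B (\<lambda>u. cnj (f u))"
  by (simp add: adj_def smat_def vec_eq_iff algebra_simps)

lemma cnj_mult_self: "cnj z * z = of_real ((cmod z)^2)"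
  by (metis complex_norm_square mult.commute)

lemma smat_cong: "(\<And>u. u \<in> B \<Longrightarrow> f u = g u) \<Longrightarrow> smat B f = smat B g"
  unfolding smat_def by (simp add: vec_eq_iff)

lemma psd_smat:
  assumes "\<And>u. u \<in> B \<Longrightarrow> f u = of_real (g u) \<and> g u \<ge> 0"
  shows "psd (smat B f)"
proof -
  have "adj (smat B f) = smat B f"
    unfolding adj_smat using assms by (intro smat_cong) auto
  moreover have "0 \<le> Re (qf (smat B f) w)" for w
  proof -
    have "Re (qf (smat B f) w) = (\<Sum>u\<in>B. g u * (cmod (ci u w))^2)"
      unfolding qf_smat Re_sum using assms
      by (intro sum.cong) (auto simp: cnj_mult_self)
    also have "\<dots> \<ge> 0" using assms by (intro sum_nonneg) auto
    finally show ?thesis by simp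
  qed
  ultimately show ?thesis by (simp add: psd_iff hermitian_def)
qed

lemma smat_mult:
  assumes "finite B" "orthonormal B"
  shows "smat B f ** smat B g = smat B (\<lambda>u. f u * g u)"
  unfolding matrix_eq
proof
  fix w
  have "(smat B f ** smat B g) *v w = smat B f *v (\<Sum>u\<in>B. (g u * ci u w) *s u)"
    by (simp add: matrix_vector_mul_assoc[symmetric] smat_mv)
  also have "\<dots> = (\<Sum>u\<in>B. (g u * ci u w) *s (f u *s u))"
    by (simp add: vec.sum vector_scalar_commute smat_eig[OF assms])
  also have "\<dots> = smat B (\<lambda>u. f u * g u) *v w"
    by (simp add: smat_mv vector_smult_assoc algebra_simps)
  finally show "(smat B f ** smat B g) *v w = smat B (\<lambda>u. f u * g u) *v w" .
qed

lemma trace_mult_smat: "trace (A ** smat B f) = (\<Sum>u\<in>B. f u * ci u (A *v u))"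
proof -
  have "trace (A ** smat B f) = (\<Sum>i\<in>UNIV. \<Sum>j\<in>UNIV. \<Sum>u\<in>B. A$i$j * (f u * u$j * cnj (u$i)))"
    by (simp add: trace_def matrix_matrix_mult_def smat_def sum_distrib_left)
  also have "\<dots> = (\<Sum>i\<in>UNIV. \<Sum>u\<in>B. \<Sum>j\<in>UNIV. A$i$j * (f u * u$j * cnj (u$i)))"
    by (intro sum.cong refl sum.swap)
  also have "\<dots> = (\<Sum>u\<in>B. \<Sum>i\<in>UNIV. \<Sum>j\<in>UNIV. A$i$j * (f u * u$j * cnj (u$i)))"
    by (rule sum.swap)
  also have "\<dots> = (\<Sum>u\<in>B. f u * ci u (A *v u))"
    by (simp add: ci_def matrix_vector_mult_def sum_distrib_left algebra_simps)
  finally show ?thesis .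
qed

lemma smat_complete:
  assumes "complete B" "\<And>u. u \<in> B \<Longrightarrow> A *v u = f u *s u"
  shows "A = smat B f"
  unfolding matrix_eq
proof
  fix w
  have "A *v w = A *v (\<Sum>u\<in>B. ci u w *s u)" using assms(1) unfolding complete_def by metis
  also have "\<dots> = (\<Sum>u\<in>B. ci u w *s (f u *s u))"
    by (simp add: vec.sum vector_scalar_commute assms(2))
  also have "\<dots> = smat B f *v w"
    by (simp add: smat_mv vector_smult_assoc algebra_simps)
  finally show "A *v w = smat B f *v w" .
qed

lemma mat1_smat: "complete B \<Longrightarrow> mat 1 = smat B (\<lambda>_. 1)"
  by (rule smat_complete) auto

lemma trace_complete:
  assumes "complete B"
  shows "trace A = (\<Sum>u\<in>B. qf A u)"
proof -
  have "trace A = trace (A ** smat B (\<lambda>_. 1))"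
    using mat1_smat[OF assms] by (metis matrix_mul_rid)
  then show ?thesis by (simp add: trace_mult_smat)
qed

lemma trace_smat:
  assumes "finite B" "orthonormal B"
  shows "trace (smat B f) = (\<Sum>u\<in>B. f u)"
proof -
  have "trace (smat B f) = trace (mat 1 ** smat B f)" by simp
  also have "\<dots> = (\<Sum>u\<in>B. f u * ci u (mat 1 *v u))" by (rule trace_mult_smat)
  also have "\<dots> = (\<Sum>u\<in>B. f u * ci u u)" by simp
  also have "\<dots> = (\<Sum>u\<in>B. f u)" using assms by (intro sum.cong) (auto simp: orthonormal_def)
  finally show ?thesis .
qed

lemma bessel:
  assumes "finite I" "\<And>i j. i \<in> I \<Longrightarrow> j \<in> I \<Longrightarrow> ci (f i) (f j) = (if i = j then 1 else 0)"
  shows "(\<Sum>i\<in>I. (cmod (ci (f i) c))^2) \<le> Re (ci c c)"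
proof -
  define a where "a i = ci (f i) c" for i
  define d where "d = c - (\<Sum>i\<in>I. a i *s f i)"
  have s1: "ci (\<Sum>i\<in>I. a i *s f i) c = (\<Sum>i\<in>I. cnj (a i) * a i)"
    by (simp add: ci_sum_left ci_scale_left a_def)
  have cf: "ci c (f i) = cnj (a i)" for i by (simp add: a_def ci_cnj)
  have s2: "ci c (\<Sum>i\<in>I. a i *s f i) = (\<Sum>i\<in>I. cnj (a i) * a i)"
    by (simp add: ci_sum_right ci_scale_right cf mult.commute)
  have s3: "ci (\<Sum>i\<in>I. a i *s f i) (\<Sum>i\<in>I. a i *s f i) = (\<Sum>i\<in>I. cnj (a i) * a i)"
  proof -
    have "ci (\<Sum>i\<in>I. a i *s f i) (\<Sum>i\<in>I. a i *s f i) = (\<Sum>j\<in>I. \<Sum>i\<in>I. a j * (cnj (a i) * ci (f i) (f j)))"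
      by (simp add: ci_sum_left ci_sum_right ci_scale_left ci_scale_right sum_distrib_left)
    also have "\<dots> = (\<Sum>j\<in>I. \<Sum>i\<in>I. if i = j then cnj (a j) * a j else 0)"
      using assms(2) by (intro sum.cong) auto
    also have "\<dots> = (\<Sum>i\<in>I. cnj (a i) * a i)" using assms(1) by (simp add: sum.delta)
    finally show ?thesis .
  qed
  have "ci d d = ci c c - (\<Sum>i\<in>I. cnj (a i) * a i)"
    unfolding d_def by (simp add: ci_diff_left ci_diff_right s1 s2 s3)
  moreover have "Re (ci d d) \<ge> 0" by (simp add: ci_self_real)
  moreover have "Re (\<Sum>i\<in>I. cnj (a i) * a i) = (\<Sum>i\<in>I. (cmod (a i))^2)"
    by (simp add: Re_sum cnj_mult_self)
  ultimately show ?thesis by (simp add: a_def)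
qed




lemma orthonormal_card:
  assumes "orthonormal (B :: (complex^'n) set)"
  shows "finite B \<and> card B \<le> DIM(complex^'n)"
proof -
  have "pairwise orthogonal B"
    using assms unfolding pairwise_def orthogonal_def orthonormal_def
    by (metis Re_ci_inner zero_complex.sel(1))
  moreover have "0 \<notin> B" using assms unfolding orthonormal_def by fastforce
  ultimately show ?thesis using independent_bound pairwise_orthogonal_independent by blast
qed

lemma qf_scaleR: "qf A (c *\<^sub>R v) = of_real (c^2) * qf A v"
  by (simp add: scaleR_svec vector_scalar_commute ci_scale_left ci_scale_right power2_eq_square)

lemma eigen_in_complement:
  assumes herm: "hermitian A" and fin: "finite B" and orth: "orthonormal B"
    and eig: "\<And>u. u \<in> B \<Longrightarrow> A *v u = of_real (l u) *s u"
    and x: "x \<noteq> 0" "\<And>u. u \<in> B \<Longrightarrow> ci u x = 0"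
  shows "\<exists>v \<mu>. ci v v = 1 \<and> (\<forall>u\<in>B. ci u v = 0) \<and> A *v v = of_real \<mu> *s v"
proof -
  define W where "W = {y. \<forall>u\<in>B. ci u y = 0}"
  define K where "K = W \<inter> {y. norm y = 1}"
  have Wadd: "y + z \<in> W" if "y \<in> W" "z \<in> W" for y z
    using that by (simp add: W_def ci_add_right)
  have Wscale: "c *s y \<in> W" if "y \<in> W" for y c
    using that by (simp add: W_def ci_scale_right)
  have WA: "A *v y \<in> W" if "y \<in> W" for y
  proof -
    have "ci u (A *v y) = 0" if "u \<in> B" for u
      using herm_ci[OF herm, of u y] eig[OF that] \<open>y \<in> W\<close> that
      by (simp add: ci_scale_left W_def)
    then show ?thesis by (simp add: W_def)
  qed
  have cW: "closed W"
  proof -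
    have "W = (\<Inter>u\<in>B. {y. ci u y = 0})" by (auto simp: W_def)
    moreover have "closed {y. ci u y = 0}" for u
      by (rule closed_Collect_eq) (auto simp: ci_def intro!: continuous_intros)
    ultimately show ?thesis by auto
  qed
  have "compact K"
  proof -
    have "closed {y::complex^'n. norm y = 1}"
      by (rule closed_Collect_eq) (auto intro!: continuous_intros)
    then have "closed K" using cW unfolding K_def by (intro closed_Int)
    moreover have "bounded K" by (auto simp: K_def bounded_iff)
    ultimately show ?thesis by (simp add: compact_eq_bounded_closed)
  qed
  moreover have "(1 / norm x) *\<^sub>R x \<in> K"
  proof -
    have "(1 / norm x) *\<^sub>R x \<in> W" using x by (simp add: W_def scaleR_svec ci_scale_right)
    moreover have "norm ((1 / norm x) *\<^sub>R x) = 1" using x by simp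
    ultimately show ?thesis by (simp add: K_def)
  qed
  then have "K \<noteq> {}" by auto
  moreover have cont: "continuous_on K (\<lambda>y. Re (qf A y))"
    unfolding ci_def matrix_vector_mult_def by (intro continuous_intros)
  ultimately have "\<exists>v\<in>K. \<forall>y\<in>K. Re (qf A y) \<le> Re (qf A v)"
    by (rule continuous_attains_sup)
  then obtain v where vK: "v \<in> K" and vmax: "\<And>y. y \<in> K \<Longrightarrow> Re (qf A y) \<le> Re (qf A v)"
    by blast
  define \<mu> where "\<mu> = Re (qf A v)"
  have vW: "v \<in> W" and vn: "norm v = 1" using vK by (auto simp: K_def)
  have bound: "Re (qf A y) \<le> \<mu> * (norm y)^2" if "y \<in> W" for y
  proof (cases "y = 0")
    case True then show ?thesis by simp
  next
    case False
    have "(1 / norm y) *\<^sub>R y \<in> K"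
    proof -
      have "(1 / norm y) *\<^sub>R y \<in> W" using that Wscale by (simp add: scaleR_svec)
      moreover have "norm ((1 / norm y) *\<^sub>R y) = 1" using False by simp
      ultimately show ?thesis by (simp add: K_def)
    qed
    then have "Re (qf A ((1 / norm y) *\<^sub>R y)) \<le> \<mu>" using vmax \<mu>_def by blast
    then have "Re (qf A y) / (norm y)^2 \<le> \<mu>"
      by (simp add: qf_scaleR power_divide)
    then show ?thesis using False by (simp add: divide_le_eq mult.commute)
  qed
  define H where "H = A - \<mu> *\<^sub>R mat 1"
  have hH: "hermitian H" unfolding H_def by (intro herm_diff herm_scaleR herm_mat1 herm)
  have qfH: "Re (qf H y) = Re (qf A y) - \<mu> * (norm y)^2" for y
    by (simp add: H_def mv_diff mv_scaleR ci_diff_right ci_scaleR_right ci_self_real)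
  have Hv: "H *v v \<in> W"
    using WA[OF vW] Wscale[OF vW, of "of_real \<mu>"] vW
    by (simp add: H_def mv_diff mv_scaleR scaleR_svec W_def ci_diff_right)
  have "Re (ci w (H *v v)) = 0" if "w \<in> W" for w
  proof (rule herm_local_max[OF hH])
    fix t :: real
    have "v + of_real t *s w \<in> W" using vW that Wadd Wscale by blast
    then have "Re (qf H (v + of_real t *s w)) \<le> 0"
      using bound[of "v + of_real t *s w"] qfH[of "v + of_real t *s w"] by linarith
    moreover have "Re (qf H v) = 0" using qfH vn \<mu>_def by simp
    ultimately show "Re (qf H (v + of_real t *s w)) \<le> Re (qf H v)" by simp
  qed
  from this[OF Hv] have "H *v v = 0"
    by (simp add: ci_self_real)
  then have "A *v v = of_real \<mu> *s v"
    by (simp add: H_def mv_diff mv_scaleR scaleR_svec)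
  moreover have "ci v v = 1" using vn by (simp add: ci_self_real)
  ultimately show ?thesis using vW W_def by blast
qed

lemma spectral:
  fixes A :: "complex^'n^'n"
  assumes herm: "hermitian A"
  shows "\<exists>B l. finite B \<and> orthonormal B \<and> complete B \<and> (\<forall>u\<in>B. A *v u = of_real (l u) *s u)"
proof -
  define P where "P k \<longleftrightarrow> (\<exists>B l. finite B \<and> orthonormal B \<and> (\<forall>u\<in>B. A *v u = of_real (l u) *s u) \<and> card B = k)" for k
  have P0: "P 0" unfolding P_def by (rule exI[of _ "{}"]) (auto simp: orthonormal_def)
  have Pb: "k \<le> DIM(complex^'n)" if "P k" for k
    using that orthonormal_card unfolding P_def by blast
  define k where "k = Greatest P"
  have "P k" unfolding k_def using GreatestI_nat[where P=P, OF P0] Pb by blast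
  then obtain B l where fin: "finite B" and orth: "orthonormal B"
    and eig: "\<forall>u\<in>B. A *v u = of_real (l u) *s u" and cB: "card B = k"
    unfolding P_def by blast
  have "complete B"
  proof (rule ccontr)
    assume "\<not> complete B"
    then obtain w where w: "w \<noteq> (\<Sum>u\<in>B. ci u w *s u)" unfolding complete_def by blast
    define x where "x = w - (\<Sum>u\<in>B. ci u w *s u)"
    have x0: "x \<noteq> 0" using w by (simp add: x_def)
    have xo: "ci u x = 0" if "u \<in> B" for u
    proof -
      have "ci u (\<Sum>u'\<in>B. ci u' w *s u') = (\<Sum>u'\<in>B. ci u' w * ci u u')"
        by (simp add: ci_sum_right ci_scale_right)
      also have "\<dots> = (\<Sum>u'\<in>B. if u' = u then ci u w else 0)"
        using orth that by (intro sum.cong) (auto simp: orthonormal_def)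
      also have "\<dots> = ci u w" using fin that by (simp add: sum.delta)
      finally show ?thesis by (simp add: x_def ci_diff_right)
    qed
    obtain v \<mu> where v: "ci v v = 1" "\<forall>u\<in>B. ci u v = 0" "A *v v = of_real \<mu> *s v"
      using eigen_in_complement[OF herm fin orth _ x0 xo] eig by blast
    have vB: "v \<notin> B" using v by fastforce
    have "P (Suc k)" unfolding P_def
    proof (intro exI conjI)
      show "finite (insert v B)" using fin by simp
      show "orthonormal (insert v B)"
      proof -
        have vu: "\<forall>u\<in>B. ci v u = 0" using v(2) by (metis ci_cnj complex_cnj_zero)
        show ?thesis using orth v vu vB unfolding orthonormal_def by auto
      qed
      show "\<forall>u\<in>insert v B. A *v u = of_real ((l(v := \<mu>)) u) *s u"
        using eig v vB by auto
      show "card (insert v B) = Suc k" using fin vB cB by simp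
    qed
    then have "Suc k \<le> k" unfolding k_def using Greatest_le_nat[where P=P] Pb by blast
    then show False by simp
  qed
  then show ?thesis using fin orth eig by blast
qed




lemma mm_diff_right: "(A::complex^'n^'n) ** (B - C) = A ** B - A ** C"
  by (simp add: matrix_matrix_mult_def vec_eq_iff algebra_simps sum_subtractf)
lemma mm_diff_left: "((A::complex^'n^'n) - B) ** C = A ** C - B ** C"
  by (simp add: matrix_matrix_mult_def vec_eq_iff algebra_simps sum_subtractf)
lemma mm_add_right: "(A::complex^'n^'n) ** (B + C) = A ** B + A ** C"
  by (simp add: matrix_matrix_mult_def vec_eq_iff algebra_simps sum.distrib)
lemma mm_add_left: "((A::complex^'n^'n) + B) ** C = A ** C + B ** C"
  by (simp add: matrix_matrix_mult_def vec_eq_iff algebra_simps sum.distrib)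
lemma trace_scaleR: "trace (c *\<^sub>R (A::complex^'n^'n)) = of_real c * trace A"
  by (simp add: trace_def sum_distrib_left cscaleR)

lemma psd_herm: "psd A \<Longrightarrow> hermitian A" by (simp add: psd_iff)
lemma psd_qf: "psd A \<Longrightarrow> 0 \<le> Re (qf A v)" by (simp add: psd_iff)
lemma herm_adj: "hermitian A \<Longrightarrow> adj A = A" by (simp add: hermitian_def)

lemma qf_herm_sq: "hermitian S \<Longrightarrow> qf (S ** S) u = ci (S *v u) (S *v u)"
  by (simp add: matrix_vector_mul_assoc[symmetric] herm_ci)

lemma eig_nonneg:
  assumes "psd A" "A *v u = of_real l *s u" "ci u u = 1"
  shows "l \<ge> 0"
proof -
  have "qf A u = of_real l" using assms(2,3) by (simp add: ci_scale_right)
  then show ?thesis using psd_qf[OF assms(1), of u] by simp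
qed

lemma spectral_smat:
  assumes "hermitian A"
  obtains B l where "finite B" "orthonormal B" "complete B"
    "\<And>u. u \<in> B \<Longrightarrow> A *v u = of_real (l u) *s u" "A = smat B (\<lambda>u. of_real (l u))"
  using spectral[OF assms] smat_complete by metis

lemma psd_sqrt_exists:
  assumes "psd A"
  shows "\<exists>S. psd S \<and> S ** S = A"
proof -
  obtain B l where B: "finite B" "orthonormal B" "complete B"
    and eig: "\<And>u. u \<in> B \<Longrightarrow> A *v u = of_real (l u) *s u" and A: "A = smat B (\<lambda>u. of_real (l u))"
    using spectral_smat[OF psd_herm[OF assms]] by blast
  have l0: "l u \<ge> 0" if "u \<in> B" for u
    using eig_nonneg[OF assms eig[OF that]] B(2) that by (auto simp: orthonormal_def)
  define S where "S = smat B (\<lambda>u. of_real (sqrt (l u)))"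
  have "psd S" unfolding S_def by (rule psd_smat) (use l0 in auto)
  moreover have "S ** S = A"
    unfolding S_def smat_mult[OF B(1,2)] A
    by (rule smat_cong) (use l0 in \<open>simp flip: of_real_mult\<close>)
  ultimately show ?thesis by blast
qed

lemma key_mono:
  assumes S: "psd S" and N: "psd N" and d: "\<And>v. 0 \<le> Re (qf (S ** S - N ** N) v)"
  shows "psd (S - N)"
proof -
  have hD: "hermitian (S - N)" using S N by (simp add: herm_diff psd_herm)
  obtain B l where B: "finite B" "orthonormal B" "complete B"
    and eig: "\<And>u. u \<in> B \<Longrightarrow> (S - N) *v u = of_real (l u) *s u" and D: "S - N = smat B (\<lambda>u. of_real (l u))"
    using spectral_smat[OF hD] by blast
  have "l u \<ge> 0" if u: "u \<in> B" for u
  proof (rule ccontr)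
    assume neg: "\<not> l u \<ge> 0"
    have uu: "ci u u = 1" using B(2) u by (simp add: orthonormal_def)
    define a where "a = S *v u"
    have Nu: "N *v u = a - of_real (l u) *s u"
    proof -
      have "S *v u - N *v u = of_real (l u) *s u" using eig[OF u] by (simp only: mv_diff)
      then show ?thesis unfolding a_def by (simp add: diff_eq_eq eq_diff_eq add.commute)
    qed
    have e1: "Re (qf (S ** S - N ** N) u) = Re (ci a a) - Re (ci (N *v u) (N *v u))"
      using S N by (simp add: mv_diff ci_diff_right qf_herm_sq[OF psd_herm] a_def)
    have "ci (N *v u) (N *v u) = ci a a - of_real (l u) * ci a u - of_real (l u) * ci u a
          + of_real (l u) * of_real (l u) * ci u u"
      unfolding Nu by (simp add: ci_diff_left ci_diff_right ci_scale_left ci_scale_right algebra_simps)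
    moreover have "ci a u = cnj (ci u a)" by (simp add: ci_cnj)
    ultimately have e2: "Re (ci (N *v u) (N *v u)) = Re (ci a a) - 2 * l u * Re (ci u a) + l u * l u"
      using uu by simp
    have "0 \<le> 2 * l u * Re (ci u a) - l u * l u" using d[of u] e1 e2 by simp
    moreover have "0 \<le> Re (ci u a)" using psd_qf[OF S] by (simp add: a_def)
    moreover have "l u * l u > 0" using neg by (simp add: mult_neg_neg)
    moreover have "2 * l u * Re (ci u a) \<le> 0"
      using neg \<open>0 \<le> Re (ci u a)\<close> by (simp add: mult_nonpos_nonneg)
    ultimately show False by linarith
  qed
  then show ?thesis unfolding D by (intro psd_smat) auto
qed

lemma psd_antisym:
  assumes "psd D" "psd (- D)"
  shows "D = 0"
proof -
  have "D *v v = 0" for v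
  proof (rule psd_qf0[OF assms(1)])
    have "Re (qf (- D) v) = - Re (qf D v)" by (simp add: mv_minus ci_def sum_negf)
    then show "Re (qf D v) = 0" using psd_qf[OF assms(1), of v] psd_qf[OF assms(2), of v] by simp
  qed
  then show ?thesis by (simp add: matrix_eq)
qed

lemma sqrt_unique:
  assumes "psd S" "psd N" "S ** S = N ** N"
  shows "S = N"
proof -
  have "psd (S - N)" by (rule key_mono) (use assms in \<open>simp_all add: mv_diff ci_def\<close>)
  moreover have "psd (N - S)" by (rule key_mono) (use assms in \<open>simp_all add: mv_diff ci_def\<close>)
  moreover have "N - S = - (S - N)" by simp
  ultimately have "S - N = 0" using psd_antisym by metis
  then show ?thesis by simp
qed

lemma msqrt:
  assumes "psd A"
  shows "psd (msqrt A)" "msqrt A ** msqrt A = A"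
proof -
  obtain S where S: "psd S" "S ** S = A" using psd_sqrt_exists[OF assms] by blast
  have "msqrt A = S" unfolding msqrt_def
    by (rule the_equality) (use S sqrt_unique in auto)
  then show "psd (msqrt A)" "msqrt A ** msqrt A = A" using S by auto
qed

lemma msqrt_eq:
  assumes "psd S" "S ** S = A"
  shows "msqrt A = S"
  unfolding msqrt_def by (rule the_equality) (use assms sqrt_unique in auto)

lemma qf_axis: "qf X (axis i 1) = X $ i $ i"
  by (simp add: ci_def axis_def matrix_vector_mult_def if_distrib if_distribR cong: if_cong)

lemma trace_psd:
  assumes "psd X"
  shows "trace X = of_real (Re (trace X))" "Re (trace X) \<ge> 0"
proof -
  have t: "trace X = (\<Sum>i\<in>UNIV. qf X (axis i 1))" by (simp add: trace_def qf_axis)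
  have "qf X (axis i 1) = of_real (Re (qf X (axis i 1)))" for i
    using herm_qf_real[OF psd_herm[OF assms]] by blast
  then have "trace X = of_real (\<Sum>i\<in>UNIV. Re (qf X (axis i 1)))"
    unfolding t by (metis (no_types, lifting) of_real_sum sum.cong)
  then show "trace X = of_real (Re (trace X))" by simp
  show "Re (trace X) \<ge> 0" unfolding t Re_sum by (intro sum_nonneg psd_qf[OF assms])
qed

lemma trace_mult_psd:
  assumes "psd P" "psd Q"
  shows "Re (trace (P ** Q)) \<ge> 0"
proof -
  define R where "R = msqrt P"
  have R: "psd R" "R ** R = P" using msqrt[OF assms(1)] by (auto simp: R_def)
  have "trace (P ** Q) = trace (R ** (R ** Q))" using R(2) by (simp add: matrix_mul_assoc)
  also have "\<dots> = trace ((R ** Q) ** R)" by (rule trace_mul_sym)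
  also have "\<dots> = trace (adj R ** Q ** R)" using herm_adj[OF psd_herm[OF R(1)]] by simp
  finally have "trace (P ** Q) = trace (adj R ** Q ** R)" .
  then show ?thesis using trace_psd(2)[OF psd_congr[OF assms(2)]] by simp
qed




lemma fid_M:
  assumes "psd \<rho>" "psd \<Phi>"
  shows "fid \<rho> \<Phi> = (Re (trace (msqrt (msqrt \<Phi> ** \<rho> ** msqrt \<Phi>))))^2"
proof -
  let ?R = "msqrt \<rho>" and ?G = "msqrt \<Phi>"
  have "adj (?R ** ?G) ** (?R ** ?G) = ?G ** ?R ** (?R ** ?G)"
    using herm_adj[OF psd_herm[OF msqrt(1)[OF assms(1)]]] herm_adj[OF psd_herm[OF msqrt(1)[OF assms(2)]]]
    by (simp add: adj_mult)
  also have "\<dots> = ?G ** (?R ** ?R) ** ?G" by (simp add: matrix_mul_assoc)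
  also have "\<dots> = ?G ** \<rho> ** ?G" using msqrt(2)[OF assms(1)] by simp
  finally show ?thesis by (simp add: fid_def trace_norm_def)
qed

lemma psd_GXG:
  assumes "psd G" "psd X"
  shows "psd (G ** X ** G)"
  using psd_congr[OF assms(2), of G] herm_adj[OF psd_herm[OF assms(1)]] by simp

lemma is_state_psd: "is_state A \<Longrightarrow> psd A" by (simp add: is_state_def)
lemma is_state_tr: "is_state A \<Longrightarrow> trace A = 1" by (simp add: is_state_def)

lemma fid_lower:
  assumes r: "psd \<rho>" and f: "is_state \<Phi>" and p: "0 \<le> p" and d: "psd (\<rho> - p *\<^sub>R \<Phi>)"
  shows "p \<le> fid \<rho> \<Phi>"
proof -
  have F: "psd \<Phi>" using f by (rule is_state_psd)
  define G where "G = msqrt \<Phi>"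
  have G: "psd G" "G ** G = \<Phi>" using msqrt[OF F] by (auto simp: G_def)
  define M where "M = G ** \<rho> ** G"
  have M: "psd M" unfolding M_def by (rule psd_GXG[OF G(1) r])
  define T where "T = msqrt M"
  have T: "psd T" "T ** T = M" using msqrt[OF M] by (auto simp: T_def)
  define N where "N = sqrt p *\<^sub>R \<Phi>"
  have N: "psd N" unfolding N_def using F p by (simp add: psd_scaleR)
  have NN: "N ** N = p *\<^sub>R (G ** \<Phi> ** G)"
  proof -
    have "N ** N = (sqrt p * sqrt p) *\<^sub>R (\<Phi> ** \<Phi>)"
      by (simp add: N_def matrix_scalar_ac scalar_matrix_assoc)
    also have "\<Phi> ** \<Phi> = G ** \<Phi> ** G"
    proof -
      have "G ** \<Phi> ** G = G ** (G ** G) ** G" using G(2) by simp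
      also have "\<dots> = (G ** G) ** (G ** G)" by (simp add: matrix_mul_assoc)
      finally show ?thesis using G(2) by simp
    qed
    finally show ?thesis using p by simp
  qed
  have "T ** T - N ** N = G ** (\<rho> - p *\<^sub>R \<Phi>) ** G"
    unfolding T(2) NN M_def by (simp add: mm_diff_left mm_diff_right matrix_scalar_ac scalar_matrix_assoc)
  then have "psd (T ** T - N ** N)" using psd_GXG[OF G(1) d] by simp
  then have "psd (T - N)" using key_mono[OF T(1) N] psd_qf by blast
  then have "0 \<le> Re (trace (T - N))" by (rule trace_psd(2))
  then have "sqrt p \<le> Re (trace T)"
    using is_state_tr[OF f] by (simp add: trace_sub N_def trace_scaleR)
  then have "(sqrt p)^2 \<le> (Re (trace T))^2" using p by (intro power_mono) auto
  then show ?thesis using p by (simp add: fid_M[OF r F] T_def M_def G_def)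
qed




lemma smat_zero: "smat B (\<lambda>_. 0) = 0"
  by (simp add: smat_def vec_eq_iff)

lemma psd_trace0:
  assumes "psd Y" "Re (trace Y) = 0"
  shows "Y = 0"
proof -
  obtain B l where B: "finite B" "orthonormal B" "complete B"
    and eig: "\<And>u. u \<in> B \<Longrightarrow> Y *v u = of_real (l u) *s u" and Y: "Y = smat B (\<lambda>u. of_real (l u))"
    using spectral_smat[OF psd_herm[OF assms(1)]] by blast
  have l0: "l u \<ge> 0" if "u \<in> B" for u
    using eig_nonneg[OF assms(1) eig[OF that]] B(2) that by (auto simp: orthonormal_def)
  have "Re (trace Y) = (\<Sum>u\<in>B. l u)" unfolding Y trace_smat[OF B(1,2)] by (simp add: Re_sum)
  then have "\<forall>u\<in>B. l u = 0" using assms(2) l0 B(1) by (simp add: sum_nonneg_eq_0_iff)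
  then have "Y = smat B (\<lambda>_. 0)" unfolding Y by (intro smat_cong) auto
  then show ?thesis by (simp add: smat_zero)
qed

lemma qf_GXG: "hermitian G \<Longrightarrow> qf (G ** X ** G) v = qf X (G *v v)"
  by (simp add: matrix_vector_mul_assoc[symmetric] herm_ci)

lemma sq_le_qf:
  assumes P: "psd P" and IP: "psd (mat 1 - P)"
  shows "(norm (P *v x))^2 \<le> Re (qf P x)"
proof -
  define Q where "Q = msqrt P"
  have Q: "psd Q" "Q ** Q = P" using msqrt[OF P] by (auto simp: Q_def)
  have "Q ** (mat 1 - P) ** Q = Q ** Q - Q ** P ** Q"
    by (simp add: mm_diff_left mm_diff_right)
  also have "Q ** P ** Q = P ** P" using Q(2) by (metis matrix_mul_assoc)
  finally have e: "Q ** (mat 1 - P) ** Q = P - P ** P" using Q(2) by simp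
  have "psd (P - P ** P)" using psd_GXG[OF Q(1) IP] e by simp
  then have "0 \<le> Re (qf (P - P ** P) x)" by (rule psd_qf)
  moreover have "qf (P ** P) x = ci (P *v x) (P *v x)" by (rule qf_herm_sq[OF psd_herm[OF P]])
  ultimately show ?thesis by (simp add: mv_diff ci_diff_right ci_self_real)
qed

lemma orth_trace_bound:
  assumes Y: "psd Y" and I: "finite I"
    and w: "\<And>i j. i \<in> I \<Longrightarrow> j \<in> I \<Longrightarrow> ci (w i) (w j) = (if i = j then 1 else 0)"
  shows "(\<Sum>i\<in>I. Re (qf Y (w i))) \<le> Re (trace Y)"
proof -
  obtain C l where C: "finite C" "orthonormal C" "complete C"
    and eig: "\<And>u. u \<in> C \<Longrightarrow> Y *v u = of_real (l u) *s u" and Ye: "Y = smat C (\<lambda>u. of_real (l u))"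
    using spectral_smat[OF psd_herm[OF Y]] by blast
  have l0: "l u \<ge> 0" if "u \<in> C" for u
    using eig_nonneg[OF Y eig[OF that]] C(2) that by (auto simp: orthonormal_def)
  have q: "Re (qf Y x) = (\<Sum>c\<in>C. l c * (cmod (ci (x) c))^2)" for x
  proof -
    have "Re (qf Y x) = (\<Sum>c\<in>C. l c * (cmod (ci c x))^2)"
      unfolding Ye qf_smat Re_sum by (intro sum.cong) (auto simp: cnj_mult_self)
    also have "\<dots> = (\<Sum>c\<in>C. l c * (cmod (ci x c))^2)"
      by (metis (no_types, lifting) ci_cnj complex_mod_cnj)
    finally show ?thesis .
  qed
  have "(\<Sum>i\<in>I. Re (qf Y (w i))) = (\<Sum>c\<in>C. l c * (\<Sum>i\<in>I. (cmod (ci (w i) c))^2))"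
    unfolding q by (simp add: sum_distrib_left) (rule sum.swap)
  also have "\<dots> \<le> (\<Sum>c\<in>C. l c * Re (ci c c))"
    by (intro sum_mono mult_left_mono bessel[OF I w]) (auto simp: l0)
  also have "\<dots> = (\<Sum>c\<in>C. l c)"
    using C(2) by (intro sum.cong) (auto simp: orthonormal_def)
  also have "\<dots> = Re (trace Y)"
    unfolding Ye trace_smat[OF C(1,2)] by (simp add: Re_sum)
  finally show ?thesis .
qed




lemma fid_upper:
  assumes r: "psd \<rho>" and f: "is_state \<Phi>" and P: "psd P" and IP: "psd (mat 1 - P)"
    and tr: "1 \<le> Re (trace (P ** \<Phi>))"
  shows "fid \<rho> \<Phi> \<le> Re (trace (P ** \<rho>))"
proof -
  have F: "psd \<Phi>" using f by (rule is_state_psd)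
  define G where "G = msqrt \<Phi>"
  have G: "psd G" "G ** G = \<Phi>" using msqrt[OF F] by (auto simp: G_def)
  define R where "R = msqrt \<rho>"
  have R: "psd R" "R ** R = \<rho>" using msqrt[OF r] by (auto simp: R_def)
  have hG: "hermitian G" and hR: "hermitian R" and hP: "hermitian P"
    using G R P by (auto simp: psd_herm)
  define Y where "Y = G ** (mat 1 - P) ** G"
  have Ypsd: "psd Y" unfolding Y_def by (rule psd_GXG[OF G(1) IP])
  have "trace Y = trace (G ** ((mat 1 - P) ** G))" by (simp add: Y_def matrix_mul_assoc)
  also have "\<dots> = trace (((mat 1 - P) ** G) ** G)" by (rule trace_mul_sym)
  also have "\<dots> = trace \<Phi> - trace (P ** \<Phi>)"
    using G(2) by (simp add: matrix_mul_assoc[symmetric] mm_diff_left trace_sub)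
  finally have "Re (trace Y) \<le> 0" using tr is_state_tr[OF f] by simp
  then have "Y = 0" using trace_psd(2)[OF Ypsd] psd_trace0[OF Ypsd] by simp
  have PG: "P *v (G *v v) = G *v v" for v
  proof -
    have "qf (mat 1 - P) (G *v v) = qf Y v" unfolding Y_def by (simp add: qf_GXG[OF hG])
    then have "Re (qf (mat 1 - P) (G *v v)) = 0" using \<open>Y = 0\<close> by simp
    then have "(mat 1 - P) *v (G *v v) = 0" by (rule psd_qf0[OF IP])
    then show ?thesis by (simp add: mv_diff)
  qed
  define M where "M = G ** \<rho> ** G"
  have Mpsd: "psd M" unfolding M_def by (rule psd_GXG[OF G(1) r])
  obtain B m where B: "finite B" "orthonormal B" "complete B"
    and eig: "\<And>u. u \<in> B \<Longrightarrow> M *v u = of_real (m u) *s u" and Me: "M = smat B (\<lambda>u. of_real (m u))"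
    using spectral_smat[OF psd_herm[OF Mpsd]] by blast
  have m0: "m u \<ge> 0" if "u \<in> B" for u
    using eig_nonneg[OF Mpsd eig[OF that]] B(2) that by (auto simp: orthonormal_def)
  have uu: "ci u u = 1" if "u \<in> B" for u using B(2) that by (simp add: orthonormal_def)
  define T where "T = smat B (\<lambda>u. of_real (sqrt (m u)))"
  have Tpsd: "psd T" unfolding T_def by (rule psd_smat) (use m0 in auto)
  have "T ** T = M"
    unfolding T_def smat_mult[OF B(1,2)] Me
    by (rule smat_cong) (use m0 in \<open>simp flip: of_real_mult\<close>)
  then have "msqrt M = T" by (rule msqrt_eq[OF Tpsd])
  have trT: "Re (trace (msqrt M)) = (\<Sum>u\<in>B. sqrt (m u))"
    unfolding \<open>msqrt M = T\<close> T_def trace_smat[OF B(1,2)] by (simp add: Re_sum)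
  define y where "y u = R *v (G *v u)" for u
  have cy: "ci (y u) (y u') = ci u (M *v u')" for u u'
  proof -
    have "ci u (M *v u') = ci u (G *v (R *v (R *v (G *v u'))))"
      unfolding M_def R(2)[symmetric] by (simp add: matrix_vector_mul_assoc[symmetric])
    also have "\<dots> = ci (y u) (y u')"
      by (simp add: herm_ci[OF hG] herm_ci[OF hR] y_def)
    finally show ?thesis by simp
  qed
  have cyB: "ci (y u) (y u') = of_real (m u') * ci u u'" if "u' \<in> B" for u u'
    using cy eig[OF that] by (simp add: ci_scale_right)
  have my: "m u = (norm (y u))^2" if "u \<in> B" for u
  proof -
    have "Re (ci (y u) (y u)) = m u" using cyB[OF that, of u] uu[OF that] by simp
    then show ?thesis by (simp add: Re_ci_inner power2_norm_eq_inner)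
  qed
  have sm: "sqrt (m u) = norm (y u)" if "u \<in> B" for u using my[OF that] by simp
  define w where "w u = (1 / norm (y u)) *\<^sub>R y u" for u
  define a where "a u = norm (P *v (R *v w u))" for u
  define b where "b u = norm (G *v u)" for u
  have ab: "norm (y u) \<le> a u * b u" for u
  proof -
    have "norm (y u) = Re (ci (w u) (y u))"
    proof (cases "y u = 0")
      case True then show ?thesis by (simp add: w_def)
    next
      case False
      then show ?thesis by (simp add: w_def ci_scaleR_left ci_self_real power2_eq_square)
    qed
    also have "ci (w u) (y u) = ci (P *v (R *v w u)) (G *v u)"
      unfolding y_def using PG[of u] by (metis herm_ci hP hR)
    also have "Re \<dots> \<le> a u * b u"
      unfolding Re_ci_inner a_def b_def by (rule norm_cauchy_schwarz)
    finally show ?thesis .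
  qed
  have sb: "(\<Sum>u\<in>B. (b u)^2) = 1"
  proof -
    have "(\<Sum>u\<in>B. (b u)^2) = Re (\<Sum>u\<in>B. qf \<Phi> u)"
      unfolding b_def Re_sum G(2)[symmetric] qf_herm_sq[OF hG] by (simp add: ci_self_real)
    also have "\<dots> = 1" using trace_complete[OF B(3), of \<Phi>] is_state_tr[OF f] by simp
    finally show ?thesis .
  qed
  define B' where "B' = {u\<in>B. y u \<noteq> 0}"
  have fB': "finite B'" using B(1) by (simp add: B'_def)
  have sa1: "(\<Sum>u\<in>B. (a u)^2) = (\<Sum>u\<in>B'. (a u)^2)"
    by (rule sum.mono_neutral_right[OF B(1)]) (auto simp: B'_def a_def w_def)
  have sa2: "(\<Sum>u\<in>B'. (a u)^2) \<le> (\<Sum>u\<in>B'. Re (qf (R ** P ** R) (w u)))"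
  proof (rule sum_mono)
    fix u assume "u \<in> B'"
    have "(a u)^2 \<le> Re (qf P (R *v w u))" unfolding a_def by (rule sq_le_qf[OF P IP])
    then show "(a u)^2 \<le> Re (qf (R ** P ** R) (w u))" by (simp add: qf_GXG[OF hR])
  qed
  have wo: "ci (w i) (w j) = (if i = j then 1 else 0)" if "i \<in> B'" "j \<in> B'" for i j
  proof -
    have "ci (w i) (w j) = of_real (1 / norm (y i)) * of_real (1 / norm (y j)) * ci (y i) (y j)"
      by (simp add: w_def ci_scaleR_left ci_scaleR_right)
    also have "ci (y i) (y j) = of_real (m j) * ci i j" using that by (simp add: cyB B'_def)
    finally show ?thesis
      using that B(2) my by (auto simp: orthonormal_def B'_def power2_eq_square)
  qed
  have sa3: "(\<Sum>u\<in>B'. Re (qf (R ** P ** R) (w u))) \<le> Re (trace (R ** P ** R))"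
    by (rule orth_trace_bound[OF psd_GXG[OF R(1) P] fB' wo])
  have trRPR: "trace (R ** P ** R) = trace (P ** \<rho>)"
  proof -
    have "trace (R ** P ** R) = trace (R ** (P ** R))" by (simp add: matrix_mul_assoc)
    also have "\<dots> = trace ((P ** R) ** R)" by (rule trace_mul_sym)
    also have "\<dots> = trace (P ** \<rho>)" using R(2) by (simp add: matrix_mul_assoc[symmetric])
    finally show ?thesis .
  qed
  have sa: "(\<Sum>u\<in>B. (a u)^2) \<le> Re (trace (P ** \<rho>))"
    using sa1 sa2 sa3 trRPR by simp
  have s1: "(\<Sum>u\<in>B. sqrt (m u)) \<le> (\<Sum>u\<in>B. a u * b u)"
  proof (rule sum_mono)
    fix u assume "u \<in> B"
    then show "sqrt (m u) \<le> a u * b u" using ab[of u] sm[OF \<open>u \<in> B\<close>] by simp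
  qed
  have s0: "0 \<le> (\<Sum>u\<in>B. sqrt (m u))" by (intro sum_nonneg) (simp add: m0)
  have "(\<Sum>u\<in>B. sqrt (m u))^2 \<le> (\<Sum>u\<in>B. a u * b u)^2"
    using s0 s1 by (intro power_mono) auto
  also have "\<dots> \<le> (\<Sum>u\<in>B. (a u)^2) * (\<Sum>u\<in>B. (b u)^2)" by (rule Cauchy_Schwarz_ineq_sum)
  also have "\<dots> \<le> Re (trace (P ** \<rho>))" using sa sb by simp
  finally show ?thesis
    unfolding fid_M[OF r F] using trT by (simp add: M_def G_def)
qed




lemma psd_mat1: "psd (mat 1 :: complex^'n^'n)"
  by (simp add: psd_iff herm_mat1 ci_self_real)

lemma trace_mult_scaleR: "trace (P ** (k *\<^sub>R A)) = of_real k * trace (P ** (A::complex^'n^'n))"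
  by (simp add: trace_def matrix_matrix_mult_def sum_distrib_left cscaleR algebra_simps)

lemma trace_scaleR_mult: "trace ((k *\<^sub>R P) ** (A::complex^'n^'n)) = of_real k * trace (P ** A)"
  by (simp add: trace_def matrix_matrix_mult_def sum_distrib_left cscaleR algebra_simps)

lemma Re_trace_comb:
  "Re (trace (P ** ((1 / (1 + s)) *\<^sub>R (A + s *\<^sub>R B)))) =
     (Re (trace (P ** A)) + s * Re (trace (P ** (B::complex^'n^'n)))) / (1 + s)"
  by (simp add: trace_mult_scaleR mm_add_right trace_add)

lemma neglog_scale:
  assumes "0 < k"
  shows "neglog (k * x) = neglog x + ereal (- log 2 k)"
proof (cases "x > 0")
  case True
  then show ?thesis using assms by (simp add: neglog_def log_mult zero_less_mult_iff)
next
  case False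
  then have "\<not> k * x > 0" using assms by (simp add: zero_less_mult_iff)
  then show ?thesis using False by (simp add: neglog_def)
qed

lemma neglog_bound:
  assumes e: "0 \<le> \<epsilon>" "\<epsilon> < 1" and s: "0 \<le> s" and x: "(1 - \<epsilon>) / (1 + s) \<le> x"
  shows "neglog x \<le> ereal (log 2 (1 + s)) + ereal (log 2 (1 / (1 - \<epsilon>)))"
proof -
  have p: "0 < (1 - \<epsilon>) / (1 + s)" using e s by simp
  then have xp: "x > 0" using x by linarith
  have "- log 2 x \<le> - log 2 ((1 - \<epsilon>) / (1 + s))" using p x by simp
  also have "\<dots> = log 2 (1 + s) + log 2 (1 / (1 - \<epsilon>))"
    using e s by (simp add: log_divide)
  finally show ?thesis using xp by (simp add: neglog_def)
qed

lemma Dmin_DH_lower: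
  assumes e: "0 \<le> \<epsilon>" "\<epsilon> < 1" and f: "is_state \<Phi>"
  shows "Dmin \<Phi> \<sigma> + ereal (log 2 (1 / (1 - \<epsilon>))) \<le> DH \<epsilon> \<Phi> \<sigma>"
proof -
  define S0 where "S0 = {P. psd P \<and> psd (mat 1 - P) \<and> 1 - 0 \<le> Re (trace (P ** \<Phi>))}"
  have "mat 1 \<in> S0" using is_state_tr[OF f] by (simp add: S0_def psd_mat1 psd_zero)
  then have ne: "S0 \<noteq> {}" by blast
  have "Dmin \<Phi> \<sigma> + ereal (log 2 (1 / (1 - \<epsilon>))) =
      (SUP P\<in>S0. neglog (Re (trace (P ** \<sigma>))) + ereal (log 2 (1 / (1 - \<epsilon>))))"
    unfolding Dmin_def DH_def S0_def[symmetric] by (rule SUP_ereal_add_left[OF ne, symmetric]) simp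
  also have "\<dots> \<le> DH \<epsilon> \<Phi> \<sigma>"
  proof (rule SUP_least)
    fix P assume "P \<in> S0"
    then have P: "psd P" "psd (mat 1 - P)" "1 \<le> Re (trace (P ** \<Phi>))" by (auto simp: S0_def)
    define P' where "P' = (1 - \<epsilon>) *\<^sub>R P"
    have "psd P'" unfolding P'_def using P(1) e by (simp add: psd_scaleR)
    moreover have eq: "mat 1 - P' = (mat 1 - P) + \<epsilon> *\<^sub>R P"
      by (simp add: P'_def algebra_simps)
    have "psd (mat 1 - P')" unfolding eq using P e by (intro psd_add psd_scaleR) auto
    moreover have "1 - \<epsilon> \<le> Re (trace (P' ** \<Phi>))"
      using P(3) e by (simp add: P'_def trace_scaleR_mult)
    moreover note \<open>psd (mat 1 - P')\<close>
    ultimately have mem: "P' \<in> {P. psd P \<and> psd (mat 1 - P) \<and> 1 - \<epsilon> \<le> Re (trace (P ** \<Phi>))}" by simp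
    have "neglog (Re (trace (P ** \<sigma>))) + ereal (log 2 (1 / (1 - \<epsilon>))) = neglog (Re (trace (P' ** \<sigma>)))"
      using e by (simp add: P'_def trace_scaleR_mult neglog_scale log_divide)
    also have "\<dots> \<le> DH \<epsilon> \<Phi> \<sigma>" unfolding DH_def by (rule SUP_upper[OF mem])
    finally show "neglog (Re (trace (P ** \<sigma>))) + ereal (log 2 (1 / (1 - \<epsilon>))) \<le> DH \<epsilon> \<Phi> \<sigma>" .
  qed
  finally show ?thesis .
qed

lemma DH_upper_one:
  assumes e: "0 \<le> \<epsilon>" "\<epsilon> < 1" and s: "0 \<le> s" and t: "is_state \<tau>"
  shows "DH \<epsilon> \<Phi> ((1 / (1 + s)) *\<^sub>R (\<Phi> + s *\<^sub>R \<tau>)) \<le> ereal (log 2 (1 + s)) + ereal (log 2 (1 / (1 - \<epsilon>)))"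
  unfolding DH_def
proof (rule SUP_least)
  fix P assume "P \<in> {P. psd P \<and> psd (mat 1 - P) \<and> 1 - \<epsilon> \<le> Re (trace (P ** \<Phi>))}"
  then have P: "psd P" "1 - \<epsilon> \<le> Re (trace (P ** \<Phi>))" by auto
  have "0 \<le> Re (trace (P ** \<tau>))" by (rule trace_mult_psd[OF P(1) is_state_psd[OF t]])
  then have "(1 - \<epsilon>) / (1 + s) \<le> Re (trace (P ** ((1 / (1 + s)) *\<^sub>R (\<Phi> + s *\<^sub>R \<tau>))))"
    unfolding Re_trace_comb using P(2) s by (intro divide_right_mono) (auto intro: add_increasing2)
  then show "neglog (Re (trace (P ** ((1 / (1 + s)) *\<^sub>R (\<Phi> + s *\<^sub>R \<tau>))))) \<le> ereal (log 2 (1 + s)) + ereal (log 2 (1 / (1 - \<epsilon>)))"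
    by (rule neglog_bound[OF e s])
qed

lemma Dmin_upper_smooth:
  assumes e: "0 \<le> \<epsilon>" "\<epsilon> < 1" and s: "0 \<le> s" and t: "is_state \<tau>" and f: "is_state \<Phi>"
    and r: "psd \<rho>" and fi: "1 - \<epsilon> \<le> fid \<rho> \<Phi>"
  shows "Dmin \<Phi> ((1 / (1 + s)) *\<^sub>R (\<rho> + s *\<^sub>R \<tau>)) \<le> ereal (log 2 (1 + s)) + ereal (log 2 (1 / (1 - \<epsilon>)))"
  unfolding Dmin_def DH_def
proof (rule SUP_least)
  fix P assume "P \<in> {P. psd P \<and> psd (mat 1 - P) \<and> 1 - 0 \<le> Re (trace (P ** \<Phi>))}"
  then have P: "psd P" "psd (mat 1 - P)" "1 \<le> Re (trace (P ** \<Phi>))" by auto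
  have "0 \<le> Re (trace (P ** \<tau>))" by (rule trace_mult_psd[OF P(1) is_state_psd[OF t]])
  moreover have "1 - \<epsilon> \<le> Re (trace (P ** \<rho>))"
    using fid_upper[OF r f P] fi by linarith
  ultimately have "(1 - \<epsilon>) / (1 + s) \<le> Re (trace (P ** ((1 / (1 + s)) *\<^sub>R (\<rho> + s *\<^sub>R \<tau>))))"
    unfolding Re_trace_comb using s by (intro divide_right_mono) (auto intro: add_increasing2)
  then show "neglog (Re (trace (P ** ((1 / (1 + s)) *\<^sub>R (\<rho> + s *\<^sub>R \<tau>))))) \<le> ereal (log 2 (1 + s)) + ereal (log 2 (1 / (1 - \<epsilon>)))"
    by (rule neglog_bound[OF e s])
qed




definition Dgen :: "(complex^'n^'n \<Rightarrow> bool) \<Rightarrow> (complex^'n^'n) set \<Rightarrow> complex^'n^'n \<Rightarrow> ereal" where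
  "Dgen Q F \<rho> = (INF s \<in> {s::real. 0 \<le> s \<and> (\<exists>\<tau>. Q \<tau> \<and>
        (1 / (1 + s)) *\<^sub>R (\<rho> + s *\<^sub>R \<tau>) \<in> F)}. ereal (log 2 (1 + s)))"

definition Deps :: "(complex^'n^'n \<Rightarrow> bool) \<Rightarrow> (complex^'n^'n) set \<Rightarrow> real \<Rightarrow> complex^'n^'n \<Rightarrow> ereal" where
  "Deps Q F \<epsilon> \<rho> = (INF \<rho>' \<in> {\<rho>'. is_state \<rho>' \<and> 1 - \<epsilon> \<le> fid \<rho>' \<rho>}. Dgen Q F \<rho>')"

lemma Dmax_gen: "Dmax_F F \<rho> = Dgen is_state F \<rho>" by (simp add: Dmax_F_def Dgen_def)
lemma Ds_gen: "Ds_F F \<rho> = Dgen (\<lambda>\<tau>. \<tau> \<in> F) F \<rho>" by (simp add: Ds_F_def Dgen_def)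
lemma Dmax_eps_gen: "Dmax_eps F \<epsilon> \<rho> = Deps is_state F \<epsilon> \<rho>"
  by (simp add: Dmax_eps_def Deps_def Dmax_gen)
lemma Ds_eps_gen: "Ds_eps F \<epsilon> \<rho> = Deps (\<lambda>\<tau>. \<tau> \<in> F) F \<epsilon> \<rho>"
  by (simp add: Ds_eps_def Deps_def Ds_gen)

lemma L1:
  assumes e: "0 \<le> \<epsilon>" "\<epsilon> < 1" and f: "is_state \<Phi>"
  shows "Dmin_set S \<Phi> + ereal (log 2 (1 / (1 - \<epsilon>))) \<le> DH_set \<epsilon> S \<Phi>"
  unfolding DH_set_def
proof (rule INF_greatest)
  fix \<sigma> assume "\<sigma> \<in> S"
  then have "Dmin_set S \<Phi> \<le> Dmin \<Phi> \<sigma>"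
    unfolding Dmin_set_def DH_set_def Dmin_def by (rule INF_lower)
  then have "Dmin_set S \<Phi> + ereal (log 2 (1 / (1 - \<epsilon>))) \<le> Dmin \<Phi> \<sigma> + ereal (log 2 (1 / (1 - \<epsilon>)))"
    by (rule add_right_mono)
  also have "\<dots> \<le> DH \<epsilon> \<Phi> \<sigma>" by (rule Dmin_DH_lower[OF e f])
  finally show "Dmin_set S \<Phi> + ereal (log 2 (1 / (1 - \<epsilon>))) \<le> DH \<epsilon> \<Phi> \<sigma>" .
qed

lemma L2:
  assumes e: "0 \<le> \<epsilon>" "\<epsilon> < 1" and hQ: "\<And>\<tau>. Q \<tau> \<Longrightarrow> is_state \<tau>"
  shows "DH_set \<epsilon> F \<Phi> \<le> Dgen Q F \<Phi> + ereal (log 2 (1 / (1 - \<epsilon>)))"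
proof -
  define I where "I = {s::real. 0 \<le> s \<and> (\<exists>\<tau>. Q \<tau> \<and> (1 / (1 + s)) *\<^sub>R (\<Phi> + s *\<^sub>R \<tau>) \<in> F)}"
  show ?thesis
  proof (cases "I = {}")
    case True
    then show ?thesis by (simp add: Dgen_def I_def[symmetric] top_ereal_def)
  next
    case False
    have "Dgen Q F \<Phi> + ereal (log 2 (1 / (1 - \<epsilon>))) =
        (INF s\<in>I. ereal (log 2 (1 + s)) + ereal (log 2 (1 / (1 - \<epsilon>))))"
      unfolding Dgen_def I_def[symmetric]
      by (rule INF_ereal_add_left[OF False, symmetric]) (auto simp: I_def)
    moreover have "DH_set \<epsilon> F \<Phi> \<le> (INF s\<in>I. ereal (log 2 (1 + s)) + ereal (log 2 (1 / (1 - \<epsilon>))))"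
    proof (rule INF_greatest)
      fix s assume "s \<in> I"
      then obtain \<tau> where s: "0 \<le> s" and t: "Q \<tau>" and mem: "(1 / (1 + s)) *\<^sub>R (\<Phi> + s *\<^sub>R \<tau>) \<in> F"
        by (auto simp: I_def)
      have "DH_set \<epsilon> F \<Phi> \<le> DH \<epsilon> \<Phi> ((1 / (1 + s)) *\<^sub>R (\<Phi> + s *\<^sub>R \<tau>))"
        unfolding DH_set_def by (rule INF_lower[OF mem])
      also have "\<dots> \<le> ereal (log 2 (1 + s)) + ereal (log 2 (1 / (1 - \<epsilon>)))"
        by (rule DH_upper_one[OF e s hQ[OF t]])
      finally show "DH_set \<epsilon> F \<Phi> \<le> ereal (log 2 (1 + s)) + ereal (log 2 (1 / (1 - \<epsilon>)))" .
    qed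
    ultimately show ?thesis by simp
  qed
qed

lemma L3: "(\<And>\<tau>. Q1 \<tau> \<Longrightarrow> Q2 \<tau>) \<Longrightarrow> Dgen Q2 F \<rho> \<le> Dgen Q1 F \<rho>"
  unfolding Dgen_def by (rule INF_superset_mono) auto

lemma L3e: "(\<And>\<tau>. Q1 \<tau> \<Longrightarrow> Q2 \<tau>) \<Longrightarrow> Deps Q2 F \<epsilon> \<rho> \<le> Deps Q1 F \<epsilon> \<rho>"
  unfolding Deps_def by (rule INF_mono) (use L3 in blast)

lemma L4: "S \<subseteq> T \<Longrightarrow> DH_set \<epsilon> T \<Phi> \<le> DH_set \<epsilon> S \<Phi>"
  unfolding DH_set_def by (rule INF_superset_mono) auto

lemma ereal_sub_le: "a \<le> ereal L + ereal c \<Longrightarrow> a - ereal c \<le> ereal L"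
  by (cases a) auto

lemma L5:
  assumes e: "0 \<le> \<epsilon>" "\<epsilon> < 1" and f: "is_state \<Phi>"
  shows "max (Dmin_set F \<Phi> - ereal (log 2 (1 / (1 - \<epsilon>)))) 0 \<le> Deps is_state F \<epsilon> \<Phi>"
  unfolding Deps_def
proof (rule INF_greatest)
  fix \<rho> assume "\<rho> \<in> {\<rho>'. is_state \<rho>' \<and> 1 - \<epsilon> \<le> fid \<rho>' \<Phi>}"
  then have r: "is_state \<rho>" and fi: "1 - \<epsilon> \<le> fid \<rho> \<Phi>" by auto
  show "max (Dmin_set F \<Phi> - ereal (log 2 (1 / (1 - \<epsilon>)))) 0 \<le> Dgen is_state F \<rho>"
    unfolding Dgen_def
  proof (rule INF_greatest)
    fix s assume "s \<in> {s::real. 0 \<le> s \<and> (\<exists>\<tau>. is_state \<tau> \<and> (1 / (1 + s)) *\<^sub>R (\<rho> + s *\<^sub>R \<tau>) \<in> F)}"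
    then obtain \<tau> where s: "0 \<le> s" and t: "is_state \<tau>" and mem: "(1 / (1 + s)) *\<^sub>R (\<rho> + s *\<^sub>R \<tau>) \<in> F"
      by auto
    have "Dmin_set F \<Phi> \<le> Dmin \<Phi> ((1 / (1 + s)) *\<^sub>R (\<rho> + s *\<^sub>R \<tau>))"
      unfolding Dmin_set_def DH_set_def Dmin_def by (rule INF_lower[OF mem])
    also have "\<dots> \<le> ereal (log 2 (1 + s)) + ereal (log 2 (1 / (1 - \<epsilon>)))"
      by (rule Dmin_upper_smooth[OF e s t f is_state_psd[OF r] fi])
    finally have "Dmin_set F \<Phi> - ereal (log 2 (1 / (1 - \<epsilon>))) \<le> ereal (log 2 (1 + s))"
      by (rule ereal_sub_le)
    moreover have "0 \<le> ereal (log 2 (1 + s))" using s by simp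
    ultimately show "max (Dmin_set F \<Phi> - ereal (log 2 (1 / (1 - \<epsilon>)))) 0 \<le> ereal (log 2 (1 + s))"
      by simp
  qed
qed

lemma state_comb:
  assumes "is_state A" "is_state B" "0 \<le> a" "0 \<le> b" "a + b = 1"
  shows "is_state (a *\<^sub>R A + b *\<^sub>R B)"
  using assms by (auto simp: is_state_def psd_add psd_scaleR trace_add trace_scaleR
      simp flip: of_real_add)




lemma L6a:
  assumes e: "0 \<le> \<epsilon>" "\<epsilon> < 1" and f: "is_state \<Phi>"
    and hQ: "\<And>\<tau>. Q \<tau> \<Longrightarrow> is_state \<tau>" and hF: "\<And>\<sigma>. \<sigma> \<in> F \<Longrightarrow> Q \<sigma>"
    and s: "0 \<le> s" and t: "Q \<tau>" and mem: "(1 / (1 + s)) *\<^sub>R (\<Phi> + s *\<^sub>R \<tau>) \<in> F"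
  shows "Deps Q F \<epsilon> \<Phi> \<le> max (ereal (log 2 (1 + s)) - ereal (log 2 (1 / (1 - \<epsilon>)))) 0"
proof -
  have ts: "is_state \<tau>" using hQ[OF t] .
  define \<sigma> where "\<sigma> = (1 / (1 + s)) *\<^sub>R (\<Phi> + s *\<^sub>R \<tau>)"
  define T where "T = (1 - \<epsilon>) * (1 + s)"
  have Tpos: "T > 0" using e s by (simp add: T_def)
  show ?thesis
  proof (cases "1 \<le> T")
    case True
    define \<rho> where "\<rho> = (1 - \<epsilon>) *\<^sub>R \<Phi> + \<epsilon> *\<^sub>R \<tau>"
    have rs: "is_state \<rho>" unfolding \<rho>_def by (rule state_comb[OF f ts]) (use e in auto)
    have "\<rho> - (1 - \<epsilon>) *\<^sub>R \<Phi> = \<epsilon> *\<^sub>R \<tau>" by (simp add: \<rho>_def)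
    then have "psd (\<rho> - (1 - \<epsilon>) *\<^sub>R \<Phi>)" using is_state_psd[OF ts] e by (simp add: psd_scaleR)
    then have fi: "1 - \<epsilon> \<le> fid \<rho> \<Phi>" using fid_lower[OF is_state_psd[OF rs] f] e by simp
    define s' where "s' = T - 1"
    have s': "0 \<le> s'" using True by (simp add: s'_def)
    have "\<rho> + s' *\<^sub>R \<tau> = (1 - \<epsilon>) *\<^sub>R \<Phi> + (\<epsilon> + s') *\<^sub>R \<tau>"
      by (simp add: \<rho>_def scaleR_add_left)
    also have "\<epsilon> + s' = (1 - \<epsilon>) * s" by (simp add: s'_def T_def algebra_simps)
    finally have "\<rho> + s' *\<^sub>R \<tau> = (1 - \<epsilon>) *\<^sub>R (\<Phi> + s *\<^sub>R \<tau>)" by (simp add: scaleR_add_right)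
    then have "(1 / (1 + s')) *\<^sub>R (\<rho> + s' *\<^sub>R \<tau>) = ((1 - \<epsilon>) / T) *\<^sub>R (\<Phi> + s *\<^sub>R \<tau>)"
      by (simp add: s'_def)
    also have "(1 - \<epsilon>) / T = 1 / (1 + s)" using e s by (simp add: T_def)
    finally have "(1 / (1 + s')) *\<^sub>R (\<rho> + s' *\<^sub>R \<tau>) \<in> F" using mem by simp
    then have "s' \<in> {s::real. 0 \<le> s \<and> (\<exists>\<tau>. Q \<tau> \<and> (1 / (1 + s)) *\<^sub>R (\<rho> + s *\<^sub>R \<tau>) \<in> F)}"
      using s' t by blast
    then have "Dgen Q F \<rho> \<le> ereal (log 2 (1 + s'))" unfolding Dgen_def by (rule INF_lower)
    moreover have "Deps Q F \<epsilon> \<Phi> \<le> Dgen Q F \<rho>" unfolding Deps_def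
      by (rule INF_lower) (use rs fi in simp)
    moreover have "log 2 (1 + s') = log 2 (1 + s) - log 2 (1 / (1 - \<epsilon>))"
      using e s by (simp add: s'_def T_def log_mult log_divide)
    ultimately have "Deps Q F \<epsilon> \<Phi> \<le> ereal (log 2 (1 + s) - log 2 (1 / (1 - \<epsilon>)))"
      by (metis order_trans)
    moreover have "ereal (log 2 (1 + s) - log 2 (1 / (1 - \<epsilon>))) = ereal (log 2 (1 + s)) - ereal (log 2 (1 / (1 - \<epsilon>)))"
      by simp
    ultimately show ?thesis by (metis max.coboundedI1)
  next
    case False
    have ss: "is_state \<sigma>"
    proof -
      have "\<sigma> = (1 / (1 + s)) *\<^sub>R \<Phi> + (s / (1 + s)) *\<^sub>R \<tau>"
        by (simp add: \<sigma>_def scaleR_add_right)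
      moreover have "is_state ((1 / (1 + s)) *\<^sub>R \<Phi> + (s / (1 + s)) *\<^sub>R \<tau>)"
        by (rule state_comb[OF f ts]) (use s in \<open>auto simp: field_simps\<close>)
      ultimately show ?thesis by simp
    qed
    have "\<sigma> - (1 / (1 + s)) *\<^sub>R \<Phi> = (s / (1 + s)) *\<^sub>R \<tau>"
      by (simp add: \<sigma>_def scaleR_add_right)
    then have "psd (\<sigma> - (1 / (1 + s)) *\<^sub>R \<Phi>)" using is_state_psd[OF ts] s by (simp add: psd_scaleR)
    then have "1 / (1 + s) \<le> fid \<sigma> \<Phi>" using fid_lower[OF is_state_psd[OF ss] f] s by simp
    moreover have "1 - \<epsilon> \<le> 1 / (1 + s)" using False s by (simp add: T_def field_simps)
    ultimately have fi: "1 - \<epsilon> \<le> fid \<sigma> \<Phi>" by linarith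
    have "(1 / (1 + 0)) *\<^sub>R (\<sigma> + 0 *\<^sub>R \<sigma>) \<in> F" using mem by (simp add: \<sigma>_def)
    then have "(0::real) \<in> {s::real. 0 \<le> s \<and> (\<exists>\<tau>. Q \<tau> \<and> (1 / (1 + s)) *\<^sub>R (\<sigma> + s *\<^sub>R \<tau>) \<in> F)}"
      using hF[OF mem] by (auto simp: \<sigma>_def)
    then have "Dgen Q F \<sigma> \<le> ereal (log 2 (1 + 0))" unfolding Dgen_def by (rule INF_lower)
    moreover have "Deps Q F \<epsilon> \<Phi> \<le> Dgen Q F \<sigma>" unfolding Deps_def
      by (rule INF_lower) (use ss fi in simp)
    moreover have "ereal (log 2 (1 + 0)) = 0" by simp
    ultimately have "Deps Q F \<epsilon> \<Phi> \<le> 0" by (metis order_trans)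
    then show ?thesis by (simp add: le_max_iff_disj)
  qed
qed

lemma L6:
  assumes e: "0 \<le> \<epsilon>" "\<epsilon> < 1" and f: "is_state \<Phi>"
    and hQ: "\<And>\<tau>. Q \<tau> \<Longrightarrow> is_state \<tau>" and hF: "\<And>\<sigma>. \<sigma> \<in> F \<Longrightarrow> Q \<sigma>"
  shows "Deps Q F \<epsilon> \<Phi> \<le> max (Dgen Q F \<Phi> - ereal (log 2 (1 / (1 - \<epsilon>)))) 0"
proof -
  define c where "c = log 2 (1 / (1 - \<epsilon>))"
  define I where "I = {s::real. 0 \<le> s \<and> (\<exists>\<tau>. Q \<tau> \<and> (1 / (1 + s)) *\<^sub>R (\<Phi> + s *\<^sub>R \<tau>) \<in> F)}"
  have X: "Dgen Q F \<Phi> = (INF s\<in>I. ereal (log 2 (1 + s)))" by (simp add: Dgen_def I_def)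
  have X0: "0 \<le> Dgen Q F \<Phi>" unfolding X by (rule INF_greatest) (auto simp: I_def)
  show ?thesis
  proof (cases "Dgen Q F \<Phi>")
    case (real x)
    show ?thesis
    proof (rule ereal_le_epsilon2)
      fix d :: real assume d: "0 < d"
      have "Dgen Q F \<Phi> < ereal (x + d)" using real d by simp
      then obtain s where sI: "s \<in> I" and sl: "ereal (log 2 (1 + s)) < ereal (x + d)"
        unfolding X by (auto simp: INF_less_iff)
      from sI obtain \<tau> where s: "0 \<le> s" and t: "Q \<tau>" and mem: "(1 / (1 + s)) *\<^sub>R (\<Phi> + s *\<^sub>R \<tau>) \<in> F"
        by (auto simp: I_def)
      have "Deps Q F \<epsilon> \<Phi> \<le> max (ereal (log 2 (1 + s)) - ereal c) 0"
        unfolding c_def by (rule L6a[where Q=Q and F=F, OF e f hQ hF s t mem])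
      also have "\<dots> = ereal (max (log 2 (1 + s) - c) 0)" by (simp add: max_def)
      also have "\<dots> \<le> ereal (max (x - c) 0 + d)" using sl d by (simp add: max_def)
      also have "\<dots> = max (Dgen Q F \<Phi> - ereal c) 0 + ereal d" using real by (simp add: max_def)
      finally show "Deps Q F \<epsilon> \<Phi> \<le> max (Dgen Q F \<Phi> - ereal (log 2 (1 / (1 - \<epsilon>)))) 0 + ereal d"
        by (simp add: c_def)
    qed
  next
    case PInf
    then show ?thesis by simp
  next
    case MInf
    then show ?thesis using X0 by simp
  qed
qed

lemma ereal_max_mono: "a \<le> (b::ereal) \<Longrightarrow> max (a - ereal c) 0 \<le> max (b - ereal c) 0"
  by (cases a; cases b) (auto simp: max_def)




theorem proposition1:
  fixes F :: "(complex^'n^'n) set" and \<Phi> :: "complex^'n^'n"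
  assumes "F \<subseteq> {\<sigma>. is_state \<sigma>}" and "convex F" and "closed F"
    and "is_state \<Phi>"
  shows "(\<forall>r. Dmin_set F \<Phi> = r \<and> Ds_F F \<Phi> = r \<longrightarrow>
            (\<forall>\<epsilon>::real. 0 \<le> \<epsilon> \<and> \<epsilon> < 1 \<longrightarrow>
               DH_set \<epsilon> F \<Phi> = r + ereal (log 2 (1 / (1 - \<epsilon>))) \<and>
               Dmax_eps F \<epsilon> \<Phi> = max (r - ereal (log 2 (1 / (1 - \<epsilon>)))) 0 \<and>
               Ds_eps F \<epsilon> \<Phi> = max (r - ereal (log 2 (1 / (1 - \<epsilon>)))) 0))
       \<and> (\<forall>r. Dmin_set (affine hull F) \<Phi> = r \<and> Dmax_F F \<Phi> = r \<longrightarrow>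
            (\<forall>\<epsilon>::real. 0 \<le> \<epsilon> \<and> \<epsilon> < 1 \<longrightarrow>
               DH_set \<epsilon> (affine hull F) \<Phi> = r + ereal (log 2 (1 / (1 - \<epsilon>))) \<and>
               DH_set \<epsilon> F \<Phi> = r + ereal (log 2 (1 / (1 - \<epsilon>))) \<and>
               Dmax_eps F \<epsilon> \<Phi> = max (r - ereal (log 2 (1 / (1 - \<epsilon>)))) 0))"
proof (intro conjI allI impI)
  have FS: "\<And>\<sigma>. \<sigma> \<in> F \<Longrightarrow> is_state \<sigma>" using assms(1) by blast
  have f: "is_state \<Phi>" by (rule assms(4))
  have Dmax_Ds: "Dmax_F F \<Phi> \<le> Ds_F F \<Phi>" unfolding Dmax_gen Ds_gen by (rule L3) (rule FS)
  {
    fix r :: ereal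
    fix \<epsilon> :: real
    assume r: "Dmin_set F \<Phi> = r \<and> Ds_F F \<Phi> = r" and e: "0 \<le> \<epsilon> \<and> \<epsilon> < 1"
    then have e1: "0 \<le> \<epsilon>" and e2: "\<epsilon> < 1" by auto
    let ?C = "ereal (log 2 (1 / (1 - \<epsilon>)))"
    have a1: "r + ?C \<le> DH_set \<epsilon> F \<Phi>" using L1[OF e1 e2 f, of F] r by simp
    have a2: "DH_set \<epsilon> F \<Phi> \<le> Ds_F F \<Phi> + ?C"
      unfolding Ds_gen by (rule L2[OF e1 e2]) (rule FS)
    show "DH_set \<epsilon> F \<Phi> = r + ?C" using a1 a2 r by simp
    have b1: "max (r - ?C) 0 \<le> Dmax_eps F \<epsilon> \<Phi>"
      unfolding Dmax_eps_gen using L5[OF e1 e2 f, of F] r by simp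
    have "Dmax_eps F \<epsilon> \<Phi> \<le> max (Dmax_F F \<Phi> - ?C) 0"
      unfolding Dmax_eps_gen Dmax_gen by (rule L6[OF e1 e2 f]) (auto simp: FS)
    also have "\<dots> \<le> max (r - ?C) 0" using Dmax_Ds r by (intro ereal_max_mono) simp
    finally have b2: "Dmax_eps F \<epsilon> \<Phi> \<le> max (r - ?C) 0" .
    show "Dmax_eps F \<epsilon> \<Phi> = max (r - ?C) 0" by (rule antisym[OF b2 b1])
    have "Dmax_eps F \<epsilon> \<Phi> \<le> Ds_eps F \<epsilon> \<Phi>"
      unfolding Dmax_eps_gen Ds_eps_gen by (rule L3e) (rule FS)
    with b1 have c1: "max (r - ?C) 0 \<le> Ds_eps F \<epsilon> \<Phi>" by (rule order_trans)
    have "Ds_eps F \<epsilon> \<Phi> \<le> max (Ds_F F \<Phi> - ?C) 0"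
      unfolding Ds_eps_gen Ds_gen by (rule L6[OF e1 e2 f]) (auto simp: FS)
    then have c2: "Ds_eps F \<epsilon> \<Phi> \<le> max (r - ?C) 0" using r by simp
    show "Ds_eps F \<epsilon> \<Phi> = max (r - ?C) 0" by (rule antisym[OF c2 c1])
  }
  {
    fix r :: ereal
    fix \<epsilon> :: real
    assume r: "Dmin_set (affine hull F) \<Phi> = r \<and> Dmax_F F \<Phi> = r" and e: "0 \<le> \<epsilon> \<and> \<epsilon> < 1"
    then have e1: "0 \<le> \<epsilon>" and e2: "\<epsilon> < 1" by auto
    let ?C = "ereal (log 2 (1 / (1 - \<epsilon>)))"
    have sub: "F \<subseteq> affine hull F" by (rule hull_subset)
    have a1: "r + ?C \<le> DH_set \<epsilon> (affine hull F) \<Phi>" using L1[OF e1 e2 f, of "affine hull F"] r by simp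
    have a2: "DH_set \<epsilon> (affine hull F) \<Phi> \<le> DH_set \<epsilon> F \<Phi>" by (rule L4[OF sub])
    have a3: "DH_set \<epsilon> F \<Phi> \<le> Dmax_F F \<Phi> + ?C"
      unfolding Dmax_gen by (rule L2[OF e1 e2]) simp
    show "DH_set \<epsilon> (affine hull F) \<Phi> = r + ?C" using a1 a2 a3 r by simp
    show "DH_set \<epsilon> F \<Phi> = r + ?C" using a1 a2 a3 r by simp
    have "r \<le> Dmin_set F \<Phi>" using r L4[OF sub, of 0 \<Phi>] by (simp add: Dmin_set_def)
    then have "max (r - ?C) 0 \<le> max (Dmin_set F \<Phi> - ?C) 0" by (rule ereal_max_mono)
    also have "\<dots> \<le> Dmax_eps F \<epsilon> \<Phi>"
      unfolding Dmax_eps_gen by (rule L5[OF e1 e2 f])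
    finally have b1: "max (r - ?C) 0 \<le> Dmax_eps F \<epsilon> \<Phi>" .
    have "Dmax_eps F \<epsilon> \<Phi> \<le> max (Dmax_F F \<Phi> - ?C) 0"
      unfolding Dmax_eps_gen Dmax_gen by (rule L6[OF e1 e2 f]) (auto simp: FS)
    then have b2: "Dmax_eps F \<epsilon> \<Phi> \<le> max (r - ?C) 0" using r by simp
    show "Dmax_eps F \<epsilon> \<Phi> = max (r - ?C) 0" by (rule antisym[OF b2 b1])
  }
qed


end
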